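(* Fix $\eta>0$, $G\ge1$, a query $q$, a policy $\pi(\cdot\mid q)$ over responses, a verifier reward $r(o)\in\{0,1\}$, and a map $o\mapsto\bar z(o)$ from responses to unit vectors in $\mathbb{R}^d$. Let $B=(o_1,\dots,o_G)$ be i.i.d. samples from $\pi(\cdot\mid q)$, with $r_i=r(o_i)$, $\bar z_i=\bar z(o_i)$, $\tilde z_i=r_i\bar z_i$. Let $\mathcal P=\{i:r_i>0\}$, $R_{\mathrm{batch}}=\sum_{i=1}^G r_i$, define $v(\emptyset)=0$ and $v(S)=\log\det(I_{|S|}+\eta L_S)$ with $L_S=(\langle\tilde z_j,\tilde z_k\rangle)_{j,k\in S}$, and for $i\in\mathcal P$ let $$\phi_i=\sum_{S\subseteq\mathcal P\setminus\{i\}}\frac{|S|!\,(|\mathcal P|-|S|-1)!}{|\mathcal P|!}\left[v(S\cup\{i\})-v(S)\right].$$ Define redistributed rewards $\tilde r_i=R_{\mathrm{batch}}\,\phi_i/\sum_{j\in\mathcal P}\phi_j$ if $r_i>0$ and $\tilde r_i=0$ if $r_i=0$. Then $$\mathbb{E}_{B\sim\pi^G}\left[\frac1G\sum_{i=1}^G\tilde r_i\right]=\mathbb{E}_{o\sim\pi(\cdot\mid q)}[r(o)].$$ In contrast, for any (integrable) batch-dependent scores $d_i=d_i(B)$ and $\lambda\in\mathbb{R}$, the additively shaped rewards $r_i^{\mathrm{add}}=r_i+\lambda d_i$ satisfy $$\mathbb{E}_{B\sim\pi^G}\left[\frac1G\sum_{i=1}^G r_i^{\mathrm{add}}\right]=\mathbb{E}_{o\sim\pi(\cdot\mid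 q)}[r(o)]+\lambda\,\mathbb{E}_{B\sim\pi^G}\left[\frac1G\sum_{i=1}^G d_i\right].$$
   Context: This is the GCPO (Group Cooperative Policy Optimization) reward: $\phi_i$ is the Shapley value of rollout $i$ in the game on positive-reward rollouts with log-determinant "team value" $v$, and the verifier reward is redistributed proportionally to these Shapley values. The paper denotes the left-hand side of the first identity $J^{\Sigma}_{\mathrm{GCPO}}(\pi;q)$ and $\mathbb{E}_{o\sim\pi}[r(o)]$ by $J_{\mathrm{obj}}(\pi;q)$; $d_i$ is an arbitrary diversity bonus. *)

theory Defs
  imports "HOL-Probability.Probability" "Jordan_Normal_Form.Determinant"
begin

definition gram_mat :: "(nat \<Rightarrow> real vec) \<Rightarrow> nat set \<Rightarrow> real mat" where
  "gram_mat z S = Matrix.mat (card S) (card S)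
     (\<lambda>(j, k). z (sorted_list_of_set S ! j) \<bullet> z (sorted_list_of_set S ! k))"

definition team_value :: "real \<Rightarrow> (nat \<Rightarrow> real vec) \<Rightarrow> nat set \<Rightarrow> real" where
  "team_value \<eta> z S =
     (if S = {} then 0
      else ln (Determinant.det (1\<^sub>m (card S) + \<eta> \<cdot>\<^sub>m gram_mat z S)))"

definition shapley :: "(nat set \<Rightarrow> real) \<Rightarrow> nat set \<Rightarrow> nat \<Rightarrow> real" where
  "shapley v P i =
     (\<Sum>S\<in>Pow (P - {i}).
        (fact (card S) * fact (card P - card S - 1) / fact (card P)) *
        (v (insert i S) - v S))"

definition gcpo_reward ::
  "real \<Rightarrow> nat \<Rightarrow> ('o \<Rightarrow> real) \<Rightarrow> ('o \<Rightarrow> real vec) \<Rightarrow> (nat \<Rightarrow> 'o) \<Rightarrow> nat \<Rightarrow> real" where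
  "gcpo_reward \<eta> G r zbar B i =
     (let rs = (\<lambda>j. r (B j));
          zt = (\<lambda>j. rs j \<cdot>\<^sub>v zbar (B j));
          P = {j \<in> {..<G}. rs j > 0};
          Rb = (\<Sum>j<G. rs j);
          \<phi> = shapley (team_value \<eta> zt) P
      in if rs i > 0 then Rb * \<phi> i / (\<Sum>j\<in>P. \<phi> j) else 0)"

definition batch_pmf :: "nat \<Rightarrow> 'o pmf \<Rightarrow> (nat \<Rightarrow> 'o) pmf" where
  "batch_pmf G \<pi> = Pi_pmf {..<G} undefined (\<lambda>_. \<pi>)"

end

theory Submission
  imports Defs
begin


lemma schur_det:
  fixes M :: "real mat"
  assumes M: "M \<in> carrier_mat (Suc n) (Suc n)" and a: "M $$ (0,0) \<noteq> 0"
  defines "S \<equiv> mat n n (\<lambda>(i,j). M $$ (Suc i, Suc j) - M $$ (Suc i, 0) / M $$ (0,0) * M $$ (0, Suc j))"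
  shows "det M = M $$ (0,0) * det S"
proof -
  let ?a = "M $$ (0,0)"
  define E :: "real mat" where "E = mat (Suc n) (Suc n) (\<lambda>(i,j). if i = j then 1 else if j = 0 then - M $$ (i,0) / ?a else 0)"
  have E: "E \<in> carrier_mat (Suc n) (Suc n)" unfolding E_def by auto
  have detE: "det E = 1"
  proof -
    have "det E = prod_list (diag_mat E)"
      by (rule det_lower_triangular[OF _ E]) (auto simp: E_def)
    also have "\<dots> = 1" unfolding prod_list_diag_prod using E by (auto simp: E_def intro!: prod.neutral)
    finally show ?thesis .
  qed
  define N where "N = E * M"
  have N: "N \<in> carrier_mat (Suc n) (Suc n)" unfolding N_def using E M by auto
  have Nij: "N $$ (i,j) = (if i = 0 then M $$ (0,j) else M $$ (i,j) - M $$ (i,0) / ?a * M $$ (0,j))"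
    if "i < Suc n" "j < Suc n" for i j
  proof -
    have "N $$ (i,j) = (\<Sum>k<Suc n. E $$ (i,k) * M $$ (k,j))"
      unfolding N_def using that E M by (auto simp: scalar_prod_def atLeast0LessThan)
    also have "\<dots> = (\<Sum>k<Suc n. (if k = i then M $$ (i,j) else 0) + (if k = 0 \<and> i \<noteq> 0 then - M $$ (i,0) / ?a * M $$ (0,j) else 0))"
      by (rule sum.cong) (use that in \<open>auto simp: E_def\<close>)
    also have "\<dots> = (if i = 0 then M $$ (0,j) else M $$ (i,j) - M $$ (i,0) / ?a * M $$ (0,j))"
      using that by (simp add: sum.distrib)
    finally show ?thesis .
  qed
  have "det N = det E * det M" unfolding N_def by (rule det_mult[OF E M])
  hence "det M = det N" using detE by simp
  also have "det N = (\<Sum>i<Suc n. N $$ (i,0) * cofactor N i 0)"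
    by (rule laplace_expansion_column[OF N]) simp
  also have "\<dots> = N $$ (0,0) * cofactor N 0 0"
    by (subst sum.lessThan_Suc_shift) (simp add: Nij a)
  also have "cofactor N 0 0 = det S"
  proof -
    have "mat_delete N 0 0 = S"
      unfolding mat_delete_def S_def using N by (auto simp: Nij)
    thus ?thesis unfolding cofactor_def by simp
  qed
  finally show ?thesis using Nij[of 0 0] by simp
qed

lemma schur_quad:
  fixes M :: "real mat" and y :: "nat \<Rightarrow> real"
  assumes a: "M $$ (0,0) \<noteq> 0"
    and sym: "\<And>i j. i < Suc n \<Longrightarrow> j < Suc n \<Longrightarrow> M $$ (i,j) = M $$ (j,i)"
  defines "b \<equiv> (\<Sum>j<n. M $$ (0, Suc j) * y j)"
  defines "x \<equiv> (\<lambda>i. if i = 0 then - b / M $$ (0,0) else y (i - 1))"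
  shows "(\<Sum>i<Suc n. \<Sum>j<Suc n. x i * M $$ (i,j) * x j)
       = (\<Sum>i<n. \<Sum>j<n. y i * (M $$ (Suc i, Suc j) - M $$ (Suc i, 0) / M $$ (0,0) * M $$ (0, Suc j)) * y j)"
proof -
  let ?a = "M $$ (0,0)"
  let ?t = "- b / ?a"
  have x0: "x 0 = ?t" unfolding x_def by simp
  have xs: "x (Suc i) = y i" for i unfolding x_def by simp
  have b2: "(\<Sum>i<n. y i * M $$ (Suc i, 0)) = b" unfolding b_def
    by (rule sum.cong) (auto simp: sym)
  have E0: "(\<Sum>i<Suc n. \<Sum>j<Suc n. x i * M $$ (i,j) * x j)
     = ?t * ?a * ?t + (\<Sum>j<n. ?t * M $$ (0, Suc j) * y j)
       + (\<Sum>i<n. y i * M $$ (Suc i, 0) * ?t + (\<Sum>j<n. y i * M $$ (Suc i, Suc j) * y j))"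
    by (simp add: sum.lessThan_Suc_shift x0 xs del: sum.lessThan_Suc)
  have E1: "(\<Sum>j<n. ?t * M $$ (0, Suc j) * y j) = ?t * b"
    using sum_distrib_left[of ?t "\<lambda>j. M $$ (0, Suc j) * y j" "{..<n}"] unfolding b_def[symmetric]
    by (simp add: mult.assoc)
  have E2: "(\<Sum>i<n. y i * M $$ (Suc i, 0) * ?t + (\<Sum>j<n. y i * M $$ (Suc i, Suc j) * y j))
      = ?t * b + (\<Sum>i<n. \<Sum>j<n. y i * M $$ (Suc i, Suc j) * y j)"
    unfolding sum.distrib sum_distrib_right[symmetric] b2 by simp
  have E3: "(\<Sum>i<n. \<Sum>j<n. y i * (M $$ (Suc i, Suc j) - M $$ (Suc i, 0) / ?a * M $$ (0, Suc j)) * y j)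
      = (\<Sum>i<n. \<Sum>j<n. y i * M $$ (Suc i, Suc j) * y j) - b * b / ?a"
  proof -
    have "(\<Sum>i<n. \<Sum>j<n. y i * (M $$ (Suc i, Suc j) - M $$ (Suc i, 0) / ?a * M $$ (0, Suc j)) * y j)
      = (\<Sum>i<n. \<Sum>j<n. y i * M $$ (Suc i, Suc j) * y j - (y i * M $$ (Suc i, 0)) * (M $$ (0, Suc j) * y j) / ?a)"
      by (intro sum.cong refl) (simp add: field_simps a)
    also have "\<dots> = (\<Sum>i<n. \<Sum>j<n. y i * M $$ (Suc i, Suc j) * y j) - (\<Sum>i<n. \<Sum>j<n. (y i * M $$ (Suc i, 0)) * (M $$ (0, Suc j) * y j)) / ?a"
      by (simp add: sum_subtractf sum_divide_distrib)
    also have "(\<Sum>i<n. \<Sum>j<n. (y i * M $$ (Suc i, 0)) * (M $$ (0, Suc j) * y j)) = (\<Sum>i<n. y i * M $$ (Suc i, 0)) * (\<Sum>j<n. M $$ (0, Suc j) * y j)"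
      by (rule sum_product[symmetric])
    finally show ?thesis unfolding b2 b_def[symmetric] .
  qed
  have E4: "?t * ?a * ?t + ?t * b + ?t * b = - (b * b / ?a)"
    using a by (simp add: field_simps)
  show ?thesis unfolding E0 E1 E2 E3 using E4 by linarith
qed

lemma det_ge_one:
  fixes M :: "real mat"
  assumes "M \<in> carrier_mat n n"
    and "\<And>i j. i < n \<Longrightarrow> j < n \<Longrightarrow> M $$ (i,j) = M $$ (j,i)"
    and "\<And>x. (\<Sum>i<n. x i * x i) \<le> (\<Sum>i<n. \<Sum>j<n. x i * M $$ (i,j) * x j)"
  shows "det M \<ge> 1 \<and> (n > 0 \<longrightarrow> det M \<ge> M $$ (0,0))"
  using assms
proof (induction n arbitrary: M)
  case 0
  then show ?case by simp
next
  case (Suc m)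
  note M = Suc.prems(1) and sym = Suc.prems(2) and pd = Suc.prems(3)
  let ?a = "M $$ (0,0)"
  have a1: "?a \<ge> 1"
  proof -
    have "(\<Sum>i<Suc m. (if i = 0 then 1 else 0) * (if i = 0 then 1 else (0::real)))
       \<le> (\<Sum>i<Suc m. \<Sum>j<Suc m. (if i = 0 then 1 else 0) * M $$ (i,j) * (if j = 0 then 1 else 0))"
      by (rule pd)
    thus ?thesis by (simp add: sum.lessThan_Suc_shift del: sum.lessThan_Suc)
  qed
  hence a0: "?a \<noteq> 0" by auto
  define S where "S = mat m m (\<lambda>(i,j). M $$ (Suc i, Suc j) - M $$ (Suc i, 0) / M $$ (0,0) * M $$ (0, Suc j))"
  have S: "S \<in> carrier_mat m m" unfolding S_def by simp
  have Sij: "S $$ (i,j) = M $$ (Suc i, Suc j) - M $$ (Suc i, 0) / M $$ (0,0) * M $$ (0, Suc j)"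
    if "i < m" "j < m" for i j unfolding S_def using that by simp
  have Ssym: "S $$ (i,j) = S $$ (j,i)" if "i < m" "j < m" for i j
    using that by (simp add: Sij sym[of "Suc i" "Suc j"] sym[of "Suc i" 0] sym[of "Suc j" 0])
  have Spd: "(\<Sum>i<m. y i * y i) \<le> (\<Sum>i<m. \<Sum>j<m. y i * S $$ (i,j) * y j)" for y
  proof -
    define b where "b = (\<Sum>j<m. M $$ (0, Suc j) * y j)"
    define x where "x = (\<lambda>i. if i = 0 then - b / M $$ (0,0) else y (i - 1))"
    have "(\<Sum>i<m. y i * y i) \<le> x 0 * x 0 + (\<Sum>i<m. y i * y i)" by simp
    also have "\<dots> = (\<Sum>i<Suc m. x i * x i)"
      by (simp add: sum.lessThan_Suc_shift x_def del: sum.lessThan_Suc)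
    also have "\<dots> \<le> (\<Sum>i<Suc m. \<Sum>j<Suc m. x i * M $$ (i,j) * x j)" by (rule pd)
    also have "\<dots> = (\<Sum>i<m. \<Sum>j<m. y i * (M $$ (Suc i, Suc j) - M $$ (Suc i, 0) / M $$ (0,0) * M $$ (0, Suc j)) * y j)"
      unfolding x_def b_def by (rule schur_quad[OF a0 sym])
    also have "\<dots> = (\<Sum>i<m. \<Sum>j<m. y i * S $$ (i,j) * y j)"
      by (intro sum.cong refl) (simp add: Sij)
    finally show ?thesis .
  qed
  have IH: "det S \<ge> 1" using conjunct1[OF Suc.IH[OF S Ssym Spd]] .
  have dM: "det M = ?a * det S" unfolding S_def by (rule schur_det[OF M a0])
  have ge: "?a * det S \<ge> ?a" using mult_left_mono[OF IH, of ?a] a1 by simp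
  have g1: "det M \<ge> 1" using dM ge a1 by linarith
  have g2: "det M \<ge> ?a" using dM ge by linarith
  show ?case using g1 g2 by simp
qed


lemma gram_quad_nonneg:
  fixes u :: "nat \<Rightarrow> real vec" and x :: "nat \<Rightarrow> real"
  assumes "\<And>i. dim_vec (u i) = d"
  shows "0 \<le> (\<Sum>i<k. \<Sum>j<k. x i * (u i \<bullet> u j) * x j)"
proof -
  have "(\<Sum>i<k. \<Sum>j<k. x i * (u i \<bullet> u j) * x j)
      = (\<Sum>i<k. \<Sum>j<k. \<Sum>l\<in>{0..<d}. (x i * u i $ l) * (x j * u j $ l))"
    using assms by (simp add: scalar_prod_def sum_distrib_left sum_distrib_right mult_ac)
  also have "\<dots> = (\<Sum>i<k. \<Sum>l\<in>{0..<d}. \<Sum>j<k. (x i * u i $ l) * (x j * u j $ l))"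
    by (rule sum.cong[OF refl], rule sum.swap)
  also have "\<dots> = (\<Sum>l\<in>{0..<d}. \<Sum>i<k. \<Sum>j<k. (x i * u i $ l) * (x j * u j $ l))"
    by (rule sum.swap)
  also have "\<dots> = (\<Sum>l\<in>{0..<d}. (\<Sum>i<k. x i * u i $ l) * (\<Sum>j<k. x j * u j $ l))"
    by (simp add: sum_product)
  also have "\<dots> \<ge> 0" by (intro sum_nonneg) simp
  finally show ?thesis .
qed

lemma team_value_pos:
  fixes w :: "nat \<Rightarrow> real vec"
  assumes eta: "\<eta> > 0" and fin: "finite S" and ne: "S \<noteq> {}"
    and dim: "\<And>j. dim_vec (w j) = d" and unit: "\<And>j. j \<in> S \<Longrightarrow> w j \<bullet> w j = 1"
  shows "team_value \<eta> w S > 0"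
proof -
  define k where "k = card S"
  define s where "s = sorted_list_of_set S"
  have k0: "k > 0" unfolding k_def using fin ne by (simp add: card_gt_0_iff)
  have lens: "length s = k" unfolding s_def k_def by simp
  have s0': "s ! 0 \<in> set s" using k0 lens by simp
  have s0: "s ! 0 \<in> S" using s0' fin unfolding s_def by simp
  define M where "M = 1\<^sub>m k + \<eta> \<cdot>\<^sub>m gram_mat w S"
  have G: "gram_mat w S \<in> carrier_mat k k" unfolding gram_mat_def k_def by (rule mat_carrier)
  have M: "M \<in> carrier_mat k k" unfolding M_def by (rule add_carrier_mat, rule smult_carrier_mat, rule G)
  have gd: "dim_row (gram_mat w S) = k" "dim_col (gram_mat w S) = k" using G by auto
  have gij: "gram_mat w S $$ (i,j) = w (s ! i) \<bullet> w (s ! j)" if "i < k" "j < k" for i j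
    unfolding gram_mat_def s_def[symmetric] k_def[symmetric] by (subst index_mat(1)[OF that]) simp
  have Mij: "M $$ (i,j) = (if i = j then 1 else 0) + \<eta> * (w (s ! i) \<bullet> w (s ! j))"
    if "i < k" "j < k" for i j
    unfolding M_def using that gd by (simp add: gij)
  have wc: "w a \<in> carrier_vec d" for a unfolding carrier_vec_def using dim[of a] by blast
  have sym: "M $$ (i,j) = M $$ (j,i)" if "i < k" "j < k" for i j
  proof -
    have "w (s ! i) \<bullet> w (s ! j) = w (s ! j) \<bullet> w (s ! i)"
      using comm_scalar_prod[OF wc wc] .
    thus ?thesis by (simp only: Mij[OF that] Mij[OF that(2) that(1)] eq_commute[of i j])
  qed
  have pd: "(\<Sum>i<k. x i * x i) \<le> (\<Sum>i<k. \<Sum>j<k. x i * M $$ (i,j) * x j)" for x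
  proof -
    have "(\<Sum>i<k. \<Sum>j<k. x i * M $$ (i,j) * x j)
       = (\<Sum>i<k. \<Sum>j<k. (if i = j then x i * x j else 0) + \<eta> * (x i * (w (s ! i) \<bullet> w (s ! j)) * x j))"
      by (intro sum.cong refl) (simp add: Mij algebra_simps)
    also have "\<dots> = (\<Sum>i<k. x i * x i) + \<eta> * (\<Sum>i<k. \<Sum>j<k. x i * (w (s ! i) \<bullet> w (s ! j)) * x j)"
      by (simp add: sum.distrib sum_distrib_left)
    finally have eq: "(\<Sum>i<k. \<Sum>j<k. x i * M $$ (i,j) * x j) = (\<Sum>i<k. x i * x i) + \<eta> * (\<Sum>i<k. \<Sum>j<k. x i * (w (s ! i) \<bullet> w (s ! j)) * x j)" .
    have "0 \<le> \<eta> * (\<Sum>i<k. \<Sum>j<k. x i * (w (s ! i) \<bullet> w (s ! j)) * x j)"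
      using gram_quad_nonneg[where u="\<lambda>i. w (s ! i)" and d=d and k=k and x=x] dim eta by (intro mult_nonneg_nonneg) auto
    thus ?thesis unfolding eq by linarith
  qed
  have "det M \<ge> M $$ (0,0)" using det_ge_one[OF M sym pd] k0 by blast
  moreover have "M $$ (0,0) = 1 + \<eta>" using Mij[OF k0 k0] unit[OF s0] by simp
  ultimately have "det M > 1" using eta by simp
  moreover have "team_value \<eta> w S = ln (det M)" unfolding team_value_def M_def k_def using ne by simp
  ultimately show ?thesis using ln_gt_zero by simp
qed



lemma sum_if_count:
  assumes "finite A"
  shows "(\<Sum>i\<in>A. if Q i then (c::real) else 0) = real (card {i\<in>A. Q i}) * c"
  using sum.inter_filter[OF assms, of "\<lambda>_. c" Q] by simp

lemma shapley_eff:
  fixes v :: "nat set \<Rightarrow> real"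
  assumes fin: "finite P" and ne: "P \<noteq> {}"
  shows "(\<Sum>i\<in>P. shapley v P i) = v P - v {}"
proof -
  define p where "p = card P"
  have p0: "p > 0" unfolding p_def using fin ne by (simp add: card_gt_0_iff)
  define w :: "nat \<Rightarrow> real" where "w s = fact s * fact (p - s - 1) / fact p" for s
  have finPow: "finite (Pow P)" using fin by simp
  have split: "(\<Sum>i\<in>P. shapley v P i)
     = (\<Sum>i\<in>P. \<Sum>S\<in>Pow (P - {i}). w (card S) * v (insert i S))
       - (\<Sum>i\<in>P. \<Sum>S\<in>Pow (P - {i}). w (card S) * v S)"
    unfolding shapley_def w_def p_def by (simp add: sum_subtractf right_diff_distrib)
  have A: "(\<Sum>i\<in>P. \<Sum>S\<in>Pow (P - {i}). w (card S) * v (insert i S))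
      = (\<Sum>T\<in>Pow P. real (card T) * w (card T - 1) * v T)"
  proof -
    have "(\<Sum>S\<in>Pow (P - {i}). w (card S) * v (insert i S))
        = (\<Sum>T\<in>Pow P. if i \<in> T then w (card T - 1) * v T else 0)" if i: "i \<in> P" for i
    proof -
      have bij: "bij_betw (insert i) (Pow (P - {i})) {T \<in> Pow P. i \<in> T}"
      proof (rule bij_betw_byWitness[where f' = "\<lambda>T. T - {i}"])
        show "\<forall>a\<in>Pow (P - {i}). insert i a - {i} = a" by auto
        show "\<forall>a'\<in>{T \<in> Pow P. i \<in> T}. insert i (a' - {i}) = a'" by auto
        show "insert i ` Pow (P - {i}) \<subseteq> {T \<in> Pow P. i \<in> T}" using i by auto
        show "(\<lambda>T. T - {i}) ` {T \<in> Pow P. i \<in> T} \<subseteq> Pow (P - {i})" by auto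
      qed
      have "(\<Sum>S\<in>Pow (P - {i}). w (card S) * v (insert i S))
          = (\<Sum>S\<in>Pow (P - {i}). w (card (insert i S) - 1) * v (insert i S))"
      proof (rule sum.cong[OF refl])
        fix S assume "S \<in> Pow (P - {i})"
        hence "finite S" "i \<notin> S" using fin finite_subset by auto
        thus "w (card S) * v (insert i S) = w (card (insert i S) - 1) * v (insert i S)" by simp
      qed
      also have "\<dots> = (\<Sum>T\<in>{T \<in> Pow P. i \<in> T}. w (card T - 1) * v T)"
        using sum.reindex_bij_betw[OF bij, of "\<lambda>T. w (card T - 1) * v T"] by simp
      also have "\<dots> = (\<Sum>T\<in>Pow P. if i \<in> T then w (card T - 1) * v T else 0)"
        by (rule sum.inter_filter[OF finPow])
      finally show ?thesis .
    qed
    hence "(\<Sum>i\<in>P. \<Sum>S\<in>Pow (P - {i}). w (card S) * v (insert i S))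
        = (\<Sum>i\<in>P. \<Sum>T\<in>Pow P. if i \<in> T then w (card T - 1) * v T else 0)"
      by (rule sum.cong[OF refl]) simp
    also have "\<dots> = (\<Sum>T\<in>Pow P. \<Sum>i\<in>P. if i \<in> T then w (card T - 1) * v T else 0)"
      by (rule sum.swap)
    also have "\<dots> = (\<Sum>T\<in>Pow P. real (card T) * w (card T - 1) * v T)"
    proof (rule sum.cong[OF refl])
      fix T assume "T \<in> Pow P"
      hence "{i\<in>P. i \<in> T} = T" by auto
      thus "(\<Sum>i\<in>P. if i \<in> T then w (card T - 1) * v T else 0) = real (card T) * w (card T - 1) * v T"
        using sum_if_count[OF fin, of "\<lambda>i. i \<in> T" "w (card T - 1) * v T"] by simp
    qed
    finally show ?thesis .
  qed
  have B: "(\<Sum>i\<in>P. \<Sum>S\<in>Pow (P - {i}). w (card S) * v S)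
      = (\<Sum>T\<in>Pow P. real (p - card T) * w (card T) * v T)"
  proof -
    have "(\<Sum>S\<in>Pow (P - {i}). w (card S) * v S)
        = (\<Sum>T\<in>Pow P. if i \<notin> T then w (card T) * v T else 0)" for i
    proof -
      have "Pow (P - {i}) = {T \<in> Pow P. i \<notin> T}" by auto
      thus ?thesis using sum.inter_filter[OF finPow, of "\<lambda>T. w (card T) * v T" "\<lambda>T. i \<notin> T"] by simp
    qed
    hence "(\<Sum>i\<in>P. \<Sum>S\<in>Pow (P - {i}). w (card S) * v S)
        = (\<Sum>i\<in>P. \<Sum>T\<in>Pow P. if i \<notin> T then w (card T) * v T else 0)"
      by simp
    also have "\<dots> = (\<Sum>T\<in>Pow P. \<Sum>i\<in>P. if i \<notin> T then w (card T) * v T else 0)"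
      by (rule sum.swap)
    also have "\<dots> = (\<Sum>T\<in>Pow P. real (p - card T) * w (card T) * v T)"
    proof (rule sum.cong[OF refl])
      fix T assume T: "T \<in> Pow P"
      have "{i\<in>P. i \<notin> T} = P - T" by auto
      moreover have "card (P - T) = p - card T" unfolding p_def
        using T fin by (simp add: card_Diff_subset finite_subset)
      ultimately show "(\<Sum>i\<in>P. if i \<notin> T then w (card T) * v T else 0) = real (p - card T) * w (card T) * v T"
        using sum_if_count[OF fin, of "\<lambda>i. i \<notin> T" "w (card T) * v T"] by simp
    qed
    finally show ?thesis .
  qed
  have coef: "real (card T) * w (card T - 1) - real (p - card T) * w (card T)
      = (if T = P then 1 else if T = {} then -1 else 0)" if T: "T \<in> Pow P" for T
  proof -
    define t where "t = card T"
    have finT: "finite T" using T fin finite_subset by auto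
    have tp: "t \<le> p" unfolding t_def p_def using T fin by (simp add: card_mono)
    show ?thesis
    proof (cases "T = P")
      case True
      hence "t = p" unfolding t_def p_def by simp
      thus ?thesis using True p0 unfolding t_def[symmetric] w_def
        by (simp add: fact_reduce[of p])
    next
      case TP: False
      hence tlt: "t < p" unfolding t_def p_def using T fin
        by (metis PowD card_subset_eq le_neq_implies_less card_mono)
      show ?thesis
      proof (cases "T = {}")
        case True
        hence "t = 0" unfolding t_def by simp
        thus ?thesis using True TP p0 unfolding t_def[symmetric] w_def
          by (simp add: fact_reduce[of p])
      next
        case False
        hence t0: "t > 0" unfolding t_def using finT by (simp add: card_gt_0_iff)
        have e1: "real t * fact (t - 1) = fact t" using t0 by (simp add: fact_reduce[of t])
        have e2: "real (p - t) * fact (p - t - 1) = fact (p - t)" using tlt by (simp add: fact_reduce[of "p - t"])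
        have e3: "p - (t - 1) - 1 = p - t" using t0 tlt by simp
        have "real t * w (t - 1) = fact t * fact (p - t) / fact p"
          unfolding w_def e3 using e1 by (simp add: mult.assoc[symmetric])
        moreover have "real (p - t) * w t = fact t * fact (p - t) / fact p"
          unfolding w_def using e2 by (simp add: mult_ac)
        ultimately show ?thesis using TP False unfolding t_def[symmetric] by simp
      qed
    qed
  qed
  have "(\<Sum>i\<in>P. shapley v P i) = (\<Sum>T\<in>Pow P. (real (card T) * w (card T - 1) - real (p - card T) * w (card T)) * v T)"
    unfolding split A B by (simp add: sum_subtractf left_diff_distrib)
  also have "\<dots> = (\<Sum>T\<in>Pow P. (if T = P then v T else 0) - (if T = {} then v T else 0))"
  proof (rule sum.cong[OF refl])
    fix T assume T: "T \<in> Pow P"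
    show "(real (card T) * w (card T - 1) - real (p - card T) * w (card T)) * v T
      = (if T = P then v T else 0) - (if T = {} then v T else 0)"
      unfolding coef[OF T] using ne by auto
  qed
  also have "\<dots> = v P - v {}"
    using finPow by (simp add: sum_subtractf)
  finally show ?thesis .
qed



lemma reward_sum:
  fixes \<eta> :: real and r :: "'o \<Rightarrow> real" and zbar :: "'o \<Rightarrow> real vec"
  assumes eta: "\<eta> > 0" and r01: "\<And>x. r x \<in> {0, 1}"
    and dim: "\<And>x. dim_vec (zbar x) = d" and unit: "\<And>x. zbar x \<bullet> zbar x = 1"
  shows "(\<Sum>i<G. gcpo_reward \<eta> G r zbar B i) = (\<Sum>i<G. r (B i))"
proof -
  define zt where "zt = (\<lambda>j. r (B j) \<cdot>\<^sub>v zbar (B j))"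
  define P where "P = {j \<in> {..<G}. r (B j) > 0}"
  define Rb where "Rb = (\<Sum>j<G. r (B j))"
  define \<phi> where "\<phi> = shapley (team_value \<eta> zt) P"
  have rw: "gcpo_reward \<eta> G r zbar B i = (if r (B i) > 0 then Rb * \<phi> i / (\<Sum>j\<in>P. \<phi> j) else 0)" for i
    unfolding gcpo_reward_def Let_def zt_def P_def Rb_def \<phi>_def by simp
  have finP: "finite P" unfolding P_def by simp
  show ?thesis
  proof (cases "P = {}")
    case True
    hence z: "r (B i) = 0" if "i < G" for i
      using that r01[of "B i"] unfolding P_def by auto
    show ?thesis using z by (simp add: rw)
  next
    case False
    have zdim: "dim_vec (zt j) = d" for j unfolding zt_def by (simp add: dim)
    have zunit: "zt j \<bullet> zt j = 1" if "j \<in> P" for j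
    proof -
      have "r (B j) = 1" using that r01[of "B j"] unfolding P_def by auto
      thus ?thesis unfolding zt_def by (simp add: unit)
    qed
    have tv: "team_value \<eta> zt P > 0" by (rule team_value_pos[OF eta finP False zdim zunit])
    have sphi: "(\<Sum>j\<in>P. \<phi> j) = team_value \<eta> zt P"
      unfolding \<phi>_def using shapley_eff[OF finP False] by (simp add: team_value_def)
    have "(\<Sum>i<G. gcpo_reward \<eta> G r zbar B i) = (\<Sum>i<G. if r (B i) > 0 then Rb * \<phi> i / (\<Sum>j\<in>P. \<phi> j) else 0)"
      by (simp add: rw)
    also have "\<dots> = (\<Sum>i\<in>P. Rb * \<phi> i / (\<Sum>j\<in>P. \<phi> j))"
      unfolding P_def by (rule sum.inter_filter[symmetric]) simp
    also have "\<dots> = Rb * (\<Sum>i\<in>P. \<phi> i) / (\<Sum>j\<in>P. \<phi> j)"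
      by (simp add: sum_divide_distrib sum_distrib_left)
    also have "\<dots> = Rb" using tv sphi by simp
    finally show ?thesis unfolding Rb_def .
  qed
qed

theorem proposition2:
  fixes \<eta> :: real and G d :: nat and \<pi> :: "'o pmf"
    and r :: "'o \<Rightarrow> real" and zbar :: "'o \<Rightarrow> real vec"
  assumes "\<eta> > 0" and "G \<ge> 1"
    and "\<And>x. r x \<in> {0, 1}"
    and "\<And>x. dim_vec (zbar x) = d"
    and "\<And>x. zbar x \<bullet> zbar x = 1"
  shows "(measure_pmf.expectation (batch_pmf G \<pi>)
           (\<lambda>B. (1 / real G) * (\<Sum>i<G. gcpo_reward \<eta> G r zbar B i))
         = measure_pmf.expectation \<pi> r) \<and>
         (\<forall>(ds :: nat \<Rightarrow> (nat \<Rightarrow> 'o) \<Rightarrow> real) (lam::real).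
           (\<forall>i<G. integrable (measure_pmf (batch_pmf G \<pi>)) (ds i)) \<longrightarrow>
           measure_pmf.expectation (batch_pmf G \<pi>)
             (\<lambda>B. (1 / real G) * (\<Sum>i<G. r (B i) + lam * ds i B))
           = measure_pmf.expectation \<pi> r
             + lam * measure_pmf.expectation (batch_pmf G \<pi>)
                     (\<lambda>B. (1 / real G) * (\<Sum>i<G. ds i B)))"
proof -
  let ?M = "measure_pmf (batch_pmf G \<pi>)"
  have bnd: "norm (r x) \<le> 1" for x using assms(3)[of x] by auto
  have intr: "integrable ?M (\<lambda>B. r (B i))" for i
    by (auto intro!: measure_pmf.integrable_const_bound[where B=1] AE_pmfI bnd)
  have Er: "measure_pmf.expectation (batch_pmf G \<pi>) (\<lambda>B. r (B i)) = measure_pmf.expectation \<pi> r"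
    if "i < G" for i
  proof -
    have "measure_pmf.expectation (batch_pmf G \<pi>) (\<lambda>B. r (B i))
        = measure_pmf.expectation (map_pmf (\<lambda>f. f i) (batch_pmf G \<pi>)) r"
      by simp
    also have "map_pmf (\<lambda>f. f i) (batch_pmf G \<pi>) = \<pi>"
      unfolding batch_pmf_def using that by (simp add: Pi_pmf_component)
    finally show ?thesis .
  qed
  have sumr: "measure_pmf.expectation (batch_pmf G \<pi>) (\<lambda>B. \<Sum>i<G. r (B i)) = real G * measure_pmf.expectation \<pi> r"
    using intr by (simp add: integral_sum Er)
  have G0: "real G > 0" using assms(2) by simp
  have part1: "measure_pmf.expectation (batch_pmf G \<pi>)
           (\<lambda>B. (1 / real G) * (\<Sum>i<G. gcpo_reward \<eta> G r zbar B i))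
         = measure_pmf.expectation \<pi> r"
  proof -
    have rs: "(\<Sum>i<G. gcpo_reward \<eta> G r zbar B i) = (\<Sum>i<G. r (B i))" for B
      by (rule reward_sum[where r=r and zbar=zbar, OF assms(1) assms(3) assms(4) assms(5)])
    show ?thesis unfolding rs using sumr G0 by simp
  qed
  have part2: "measure_pmf.expectation (batch_pmf G \<pi>)
             (\<lambda>B. (1 / real G) * (\<Sum>i<G. r (B i) + lam * ds i B))
           = measure_pmf.expectation \<pi> r
             + lam * measure_pmf.expectation (batch_pmf G \<pi>)
                     (\<lambda>B. (1 / real G) * (\<Sum>i<G. ds i B))"
    if ids: "\<forall>i<G. integrable ?M (ds i)" for ds :: "nat \<Rightarrow> (nat \<Rightarrow> 'o) \<Rightarrow> real" and lam :: real
  proof -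
    have ids': "integrable ?M (\<lambda>B. ds i B)" if "i \<in> {..<G}" for i using ids that by simp
    have "measure_pmf.expectation (batch_pmf G \<pi>) (\<lambda>B. (1 / real G) * (\<Sum>i<G. r (B i) + lam * ds i B))
        = (1 / real G) * measure_pmf.expectation (batch_pmf G \<pi>) (\<lambda>B. \<Sum>i<G. r (B i) + lam * ds i B)"
      by simp
    also have "measure_pmf.expectation (batch_pmf G \<pi>) (\<lambda>B. \<Sum>i<G. r (B i) + lam * ds i B)
        = (\<Sum>i<G. measure_pmf.expectation (batch_pmf G \<pi>) (\<lambda>B. r (B i) + lam * ds i B))"
      by (rule Bochner_Integration.integral_sum) (use intr ids' in auto)
    also have "\<dots> = (\<Sum>i<G. measure_pmf.expectation \<pi> r + lam * measure_pmf.expectation (batch_pmf G \<pi>) (ds i))"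
    proof (rule sum.cong[OF refl])
      fix i assume i: "i \<in> {..<G}"
      have "measure_pmf.expectation (batch_pmf G \<pi>) (\<lambda>B. r (B i) + lam * ds i B)
          = measure_pmf.expectation (batch_pmf G \<pi>) (\<lambda>B. r (B i)) + measure_pmf.expectation (batch_pmf G \<pi>) (\<lambda>B. lam * ds i B)"
        by (rule Bochner_Integration.integral_add) (use intr ids'[OF i] in auto)
      also have "\<dots> = measure_pmf.expectation \<pi> r + lam * measure_pmf.expectation (batch_pmf G \<pi>) (ds i)"
        using Er i by simp
      finally show "measure_pmf.expectation (batch_pmf G \<pi>) (\<lambda>B. r (B i) + lam * ds i B) = measure_pmf.expectation \<pi> r + lam * measure_pmf.expectation (batch_pmf G \<pi>) (ds i)" .
    qed
    also have "\<dots> = real G * measure_pmf.expectation \<pi> r + lam * (\<Sum>i<G. measure_pmf.expectation (batch_pmf G \<pi>) (ds i))"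
      by (simp add: sum.distrib sum_distrib_left)
    also have "(\<Sum>i<G. measure_pmf.expectation (batch_pmf G \<pi>) (ds i)) = measure_pmf.expectation (batch_pmf G \<pi>) (\<lambda>B. \<Sum>i<G. ds i B)"
      by (rule Bochner_Integration.integral_sum[symmetric]) (use ids' in auto)
    finally show ?thesis using G0 by (simp add: field_simps)
  qed
  show ?thesis using part1 part2 by blast
qed

end
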